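(* Let $d=2$ and let $\Omega_{\mathrm O},\Omega_{\mathrm I}$ satisfy assumptions (1)–(4). If $\Omega_{\mathrm I}$ is path-connected, then assumption (5) also holds.
   Context: $\Omega_{\mathrm O}\subset\mathbb R^2$ is a nonempty open strictly convex set and $\Omega_{\mathrm I}\subset\Omega_{\mathrm O}$ is a closed set; $\operatorname{conv}$, $\operatorname{int}$, $\operatorname{cl}$, $\partial$ denote convex hull, interior, closure, boundary. A ray is a set $\{x+te: t\ge0\}$ with $e\ne0$. Assumptions: (1) $\partial\operatorname{conv}\Omega_{\mathrm I}$ contains no rays; (2) $\operatorname{cl}\operatorname{conv}\Omega_{\mathrm I}\subset\Omega_{\mathrm O}$; (3) $\operatorname{int}\operatorname{conv}\Omega_{\mathrm I}\ne\varnothing$ and $\Omega_{\mathrm O}$ and $\operatorname{conv}\Omega_{\mathrm I}$ have congruent maximal inscribed cones (the set of directions $e$ such that some ray $\{x+te:t\ge0\}$ is contained in the set is the same for both sets); (4) the set $(\operatorname{int}\operatorname{conv}\Omega_{\mathrm I})\setminus\Omega_{\mathrm I}$ is a locally finite union of its connected components $\omega_j$ (every bounded set meets only finitely many $\omega_j$); (5) for every $j$ there is a supporting line $L_j$ to $\operatorname{conv}\Omega_{\mathrm I}$ that contains $E_j:=\partial\omega_j\setminus\Omega_{\mathrm I}$. *)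

theory Defs
  imports "HOL-Analysis.Analysis"
begin

definition strictly_convex :: "(real^2) set \<Rightarrow> bool" where
  "strictly_convex S \<longleftrightarrow> convex S \<and> S \<noteq> UNIV \<and>
     (\<forall>x\<in>closure S. \<forall>y\<in>closure S. x \<noteq> y \<longrightarrow> open_segment x y \<subseteq> interior S)"

definition ray :: "real^2 \<Rightarrow> real^2 \<Rightarrow> (real^2) set" where
  "ray x e = {x + t *\<^sub>R e | t. t \<ge> 0}"

definition ray_directions :: "(real^2) set \<Rightarrow> (real^2) set" where
  "ray_directions S = {e. e \<noteq> 0 \<and> (\<exists>x. ray x e \<subseteq> S)}"

definition supporting_line :: "(real^2) set \<Rightarrow> (real^2) set \<Rightarrow> bool" where
  "supporting_line L C \<longleftrightarrow> (\<exists>a b. a \<noteq> 0 \<and> L = {x. a \<bullet> x = b} \<and> (\<forall>x\<in>C. a \<bullet> x \<le> b)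
      \<and> L \<inter> closure C \<noteq> {})"

end

theory Submission
  imports Defs
begin


lemma norm_decomp:
  fixes a u y :: "real^2"
  assumes "norm a = 1" "norm u = 1" "a \<bullet> u = 0" "y = (a \<bullet> y) *\<^sub>R a + (u \<bullet> y) *\<^sub>R u"
  shows "(norm y)^2 = (a \<bullet> y)^2 + (u \<bullet> y)^2"
proof -
  have aa: "a \<bullet> a = 1" "u \<bullet> u = 1" using assms(1,2) by (simp_all add: norm_eq_1)
  have "(norm y)^2 = y \<bullet> y" by (simp add: power2_norm_eq_inner)
  also have "\<dots> = ((a \<bullet> y) *\<^sub>R a + (u \<bullet> y) *\<^sub>R u) \<bullet> ((a \<bullet> y) *\<^sub>R a + (u \<bullet> y) *\<^sub>R u)"
    using assms(4) by simp
  also have "\<dots> = (a \<bullet> y)^2 + (u \<bullet> y)^2"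
    using aa assms(3) by (simp add: inner_add_left inner_add_right inner_commute power2_eq_square)
  finally show ?thesis .
qed

lemma side:
  fixes OmI :: "(real^2) set" and p a u :: "real^2"
  defines "K \<equiv> closure (convex hull OmI)"
  assumes clo: "closed OmI" and pK: "p \<in> K" and pn: "p \<notin> OmI"
    and sup: "\<forall>x\<in>K. a \<bullet> x \<le> a \<bullet> p"
    and na: "norm a = 1" and au: "a \<bullet> u = 0" and nu: "norm u = 1"
    and dec: "\<forall>x. x = (a \<bullet> x) *\<^sub>R a + (u \<bullet> x) *\<^sub>R u"
    and noray: "\<not> ray p (-u) \<subseteq> K \<inter> {x. a \<bullet> x = a \<bullet> p}"
  shows "\<exists>t\<in>OmI. a \<bullet> t = a \<bullet> p \<and> u \<bullet> (t - p) < 0"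
proof (rule ccontr)
  assume H0: "\<not> ?thesis"
  have H: "\<And>t. t \<in> OmI \<Longrightarrow> a \<bullet> t = a \<bullet> p \<Longrightarrow> u \<bullet> (t - p) \<ge> 0"
    using H0 by (meson not_le)
  have cK: "convex K" "closed K" by (simp_all add: K_def convex_closure)
  have OK: "OmI \<subseteq> K" unfolding K_def by (meson closure_subset hull_subset subset_trans)
  have nd: "\<And>y. (norm y)^2 = (a \<bullet> y)^2 + (u \<bullet> y)^2"
    using norm_decomp na nu au dec by blast
  have neg: "\<And>z. z \<in> K \<Longrightarrow> a \<bullet> (z - p) \<le> 0" using sup by (simp add: inner_diff_right)
  have Ble: "\<And>y. \<bar>u \<bullet> y\<bar> \<le> norm y" using Cauchy_Schwarz_ineq2[of u] nu by (simp add: inner_commute)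
  have Ale: "\<And>y. \<bar>a \<bullet> y\<bar> \<le> norm y" using Cauchy_Schwarz_ineq2[of a] na by (simp add: inner_commute)
  obtain r where r: "r > 0" "ball p r \<subseteq> - OmI"
    using clo pn open_contains_ball[of "- OmI"] by (auto simp: open_Compl)
  have far: "\<And>z. z \<in> OmI \<Longrightarrow> norm (z - p) \<ge> r"
    using r by (force simp: dist_norm norm_minus_commute subset_iff)
  define viol where "viol \<equiv> \<lambda>\<kappa> z. a \<bullet> (z - p) > \<kappa> * (u \<bullet> (z - p) - r/2)"
  have vB: "u \<bullet> (z - p) < r/2" if "z \<in> OmI" "viol \<kappa> z" "\<kappa> > 0" for z \<kappa>
  proof -
    have "a \<bullet> (z - p) \<le> 0" using neg OK that(1) by blast
    then have "\<kappa> * (u \<bullet> (z - p) - r/2) < 0" using that(2) unfolding viol_def by linarith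
    then show ?thesis using that(3) by (simp add: mult_less_0_iff)
  qed
  have C1: "\<exists>\<kappa>>0. \<forall>z\<in>OmI. \<not> viol \<kappa> z"
  proof (rule ccontr)
    assume V0: "\<not> ?thesis"
    then have V: "\<And>\<kappa>. \<kappa> > 0 \<Longrightarrow> \<exists>z\<in>OmI. viol \<kappa> z" by blast
    show False
    proof (cases "\<exists>M. \<forall>\<kappa>>0. \<exists>z\<in>OmI. norm (z - p) \<le> M \<and> viol \<kappa> z")
      case True
      then obtain M where M: "\<And>\<kappa>. \<kappa> > 0 \<Longrightarrow> \<exists>z\<in>OmI. norm (z - p) \<le> M \<and> viol \<kappa> z" by blast
      define Q where "Q = OmI \<inter> cball p M \<inter> {z. u \<bullet> (z - p) \<le> r/2}"
      have "Q = OmI \<inter> cball p M \<inter> {z. u \<bullet> z \<le> r/2 + u \<bullet> p}"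
        unfolding Q_def by (auto simp: inner_diff_right)
      moreover have "compact ((OmI \<inter> {z. u \<bullet> z \<le> r/2 + u \<bullet> p}) \<inter> cball p M)"
        by (intro closed_Int_compact closed_Int clo closed_halfspace_le compact_cball)
      ultimately have cQ: "compact Q" by (simp add: Int_ac)
      obtain z1 where z1: "z1 \<in> OmI" "norm (z1 - p) \<le> M" "viol 1 z1" using M[of 1] by auto
      have "z1 \<in> Q" using z1 vB[of z1 1] by (auto simp: Q_def dist_norm norm_minus_commute)
      then have Qne: "Q \<noteq> {}" by blast
      have "continuous_on Q (\<lambda>z. a \<bullet> (z - p))" by (intro continuous_intros)
      then obtain zs where zs: "zs \<in> Q" "\<And>z. z \<in> Q \<Longrightarrow> a \<bullet> (z - p) \<le> a \<bullet> (zs - p)"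
        using continuous_attains_sup[OF cQ Qne] by blast
      have zsO: "zs \<in> OmI" using zs(1) by (simp add: Q_def)
      have M0: "M \<ge> 0" using z1(2) norm_ge_zero order_trans by blast
      have "a \<bullet> (zs - p) \<ge> 0"
      proof (rule ccontr)
        assume "\<not> a \<bullet> (zs - p) \<ge> 0"
        then have c: "- a \<bullet> (zs - p) > 0" by simp
        define \<kappa> where "\<kappa> = (- a \<bullet> (zs - p)) / (M + r/2 + 1)"
        have kp: "\<kappa> > 0" unfolding \<kappa>_def using c M0 r by (intro divide_pos_pos) auto
        obtain z where z: "z \<in> OmI" "norm (z - p) \<le> M" "viol \<kappa> z" using M[OF kp] by blast
        have "z \<in> Q" using z vB[of z \<kappa>] kp by (auto simp: Q_def dist_norm norm_minus_commute)
        then have le: "a \<bullet> (z - p) \<le> a \<bullet> (zs - p)" using zs(2) by blast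
        have "u \<bullet> (z - p) \<ge> - M" using Ble[of "z - p"] z(2) by linarith
        then have "\<kappa> * (u \<bullet> (z - p) - r/2) \<ge> \<kappa> * (- M - r/2)" using kp by (intro mult_left_mono) auto
        moreover have "\<kappa> * (- M - r/2) > a \<bullet> (zs - p)"
        proof -
          have "\<kappa> * (M + r/2 + 1) = - a \<bullet> (zs - p)" unfolding \<kappa>_def using M0 r by simp
          then show ?thesis using kp by (simp add: algebra_simps)
        qed
        ultimately show False using z(3) le unfolding viol_def by linarith
      qed
      moreover have "zs \<in> K" using OK zsO by blast
      ultimately have eq: "a \<bullet> zs = a \<bullet> p"
        using neg[of zs] by (simp add: inner_diff_right)
      have g0: "u \<bullet> (zs - p) \<ge> 0" using H[OF zsO eq] .
      have g1: "u \<bullet> (zs - p) \<le> r/2" using zs(1) by (simp add: Q_def)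
      have g2: "(norm (zs - p))^2 = (u \<bullet> (zs - p))^2"
        using nd[of "zs - p"] eq by (simp add: inner_diff_right)
      have g3: "norm (zs - p) \<ge> r" using far zsO by blast
      have "norm (zs - p) = u \<bullet> (zs - p)" using power2_eq_imp_eq[OF g2 norm_ge_zero g0] .
      then show False using g1 g3 r(1) by linarith
    next
      case False
      then have NM: "\<And>M. \<exists>\<kappa>>0. \<forall>z\<in>OmI. norm (z - p) \<le> M \<longrightarrow> \<not> viol \<kappa> z" by blast
      have mono: "\<not> viol \<kappa>' z" if "\<not> viol \<kappa> z" "0 < \<kappa>'" "\<kappa>' \<le> \<kappa>" "z \<in> OmI" for \<kappa> \<kappa>' z
      proof -
        have A0: "a \<bullet> (z - p) \<le> 0" using neg OK that(4) by blast
        show ?thesis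
        proof (cases "u \<bullet> (z - p) - r/2 \<ge> 0")
          case True
          then have "\<kappa>' * (u \<bullet> (z - p) - r/2) \<ge> 0" using that(2) by simp
          then show ?thesis using A0 unfolding viol_def by linarith
        next
          case False
          then have "\<kappa> * (u \<bullet> (z - p) - r/2) \<le> \<kappa>' * (u \<bullet> (z - p) - r/2)"
            using that(3) by (intro mult_right_mono_neg) auto
          then show ?thesis using that(1) unfolding viol_def by linarith
        qed
      qed
      have "ray p (-u) \<subseteq> K \<inter> {x. a \<bullet> x = a \<bullet> p}"
      proof
        fix x assume "x \<in> ray p (-u)"
        then obtain t where t: "t \<ge> 0" "x = p + t *\<^sub>R (-u)" by (auto simp: ray_def)
        have ax: "a \<bullet> x = a \<bullet> p" using t au by (simp add: inner_add_right inner_diff_right)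
        have "x \<in> K"
        proof (cases "t = 0")
          case True then show ?thesis using t pK by simp
        next
          case False
          then have tp: "t > 0" using t by simp
          have "\<forall>e>0. \<exists>y\<in>K. dist y x < e"
          proof (intro allI impI)
            fix e :: real assume e: "e > 0"
            obtain \<kappa>M where kM: "\<kappa>M > 0" "\<forall>z\<in>OmI. norm (z - p) \<le> max r t \<longrightarrow> \<not> viol \<kappa>M z"
              using NM[of "max r t"] by blast
            define \<kappa> where "\<kappa> = min \<kappa>M (min (1/4) (e / (3 * t)))"
            have kp: "\<kappa> > 0" using kM e tp by (simp add: \<kappa>_def)
            have k1: "\<kappa> \<le> 1/4" "\<kappa> \<le> e / (3 * t)" "\<kappa> \<le> \<kappa>M" by (simp_all add: \<kappa>_def)
            obtain z where z: "z \<in> OmI" "viol \<kappa> z" using V[OF kp] by blast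
            have Rbig: "norm (z - p) > max r t"
              using kM(2) mono[of \<kappa>M z \<kappa>] z kp k1 by force
            define R where "R = norm (z - p)"
            define A where "A = a \<bullet> (z - p)"
            define B where "B = u \<bullet> (z - p)"
            have RrRt: "R > r" "R > t" using Rbig by (simp_all add: R_def)
            have Rp: "R > 0" using RrRt r by simp
            have RAB: "R^2 = A^2 + B^2" using nd[of "z - p"] by (simp add: R_def A_def B_def)
            have A0: "A \<le> 0" using neg OK z(1) by (auto simp: A_def)
            have Bh: "B < r/2" using vB z kp by (simp add: B_def)
            have vi: "A > \<kappa> * (B - r/2)" using z(2) by (simp add: viol_def A_def B_def)
            have "- A < \<kappa> * (r/2 - B)" using vi by (simp add: algebra_simps)
            have Bge: "B \<ge> - R" using Ble[of "z - p"] by (simp add: R_def B_def)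
            have rB: "r/2 - B \<le> 3/2 * R" using Bge RrRt by linarith
            have absA: "\<bar>A\<bar> \<le> \<kappa> * (3/2 * R)"
            proof -
              have "\<bar>A\<bar> = - A" using A0 by simp
              also have "\<dots> < \<kappa> * (r/2 - B)" using vi by (simp add: algebra_simps)
              also have "\<dots> \<le> \<kappa> * (3/2 * R)" using rB kp by (intro mult_left_mono) auto
              finally show ?thesis by simp
            qed
            have A2: "A^2 \<le> (\<kappa> * (3/2 * R))^2"
              using power_mono[OF absA abs_ge_zero, of 2] by simp
            have A2': "A^2 \<le> 9/64 * R^2"
            proof -
              have "(\<kappa> * (3/2 * R))^2 = \<kappa>^2 * (9/4) * R^2" by (simp add: power_mult_distrib power_divide)
              also have "\<dots> \<le> (1/4)^2 * (9/4) * R^2"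
                using k1 kp by (intro mult_right_mono power_mono) auto
              also have "\<dots> = 9/64 * R^2" by (simp add: power2_eq_square)
              finally have X: "(\<kappa> * (3/2 * R))^2 \<le> 9/64 * R^2" .
              show ?thesis using A2 X by linarith
            qed
            have Bneg: "B < 0"
            proof (rule ccontr)
              assume "\<not> B < 0"
              then have "B^2 < (R/2)^2" using Bh RrRt r by (intro power_strict_mono) auto
              then have "B^2 < R^2/4" by (simp add: power_divide)
              then show False using RAB A2' zero_le_power2[of A] zero_le_power2[of B] by linarith
            qed
            have key: "R + B \<le> A^2 / R"
            proof -
              have "(R + B) * (R - B) = A^2" using RAB by (simp add: algebra_simps power2_eq_square)
              moreover have "R - B \<ge> R" using Bneg by simp
              moreover have "R + B \<ge> 0" using Bge by simp
              ultimately have "(R + B) * R \<le> A^2"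
                using mult_left_mono[of R "R - B" "R + B"] by simp
              then show ?thesis using Rp by (simp add: field_simps)
            qed
            define y where "y = p + (t / R) *\<^sub>R (z - p)"
            have yK: "y \<in> K"
            proof -
              have "y = (1 - t/R) *\<^sub>R p + (t/R) *\<^sub>R z" by (simp add: y_def algebra_simps)
              moreover have "0 \<le> t/R" "t/R \<le> 1" using tp Rp RrRt by auto
              ultimately show ?thesis using cK(1) pK OK z(1)
                by (metis convexD diff_add_cancel diff_ge_0_iff_ge subsetD)
            qed
            have "y - x = t *\<^sub>R ((1/R) *\<^sub>R (z - p) + u)"
              by (simp add: y_def t(2) algebra_simps)
            then have dyx: "dist y x = t * norm ((1/R) *\<^sub>R (z - p) + u)"
              using tp by (simp add: dist_norm)
            have uu: "u \<bullet> u = 1" using nu by (simp add: norm_eq_1)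
            have "(norm ((1/R) *\<^sub>R (z - p) + u))^2 = ((1/R) *\<^sub>R (z - p) + u) \<bullet> ((1/R) *\<^sub>R (z - p) + u)"
              by (rule power2_norm_eq_inner)
            also have "\<dots> = (1/R) * (1/R) * ((z - p) \<bullet> (z - p)) + 2 * (1/R) * (u \<bullet> (z - p)) + u \<bullet> u"
              by (simp only: inner_add_left inner_add_right inner_scaleR_left inner_scaleR_right inner_commute[of u "z - p"]) (simp add: algebra_simps)
            also have "\<dots> = (1/R) * (1/R) * (R * R) + 2 * (1/R) * B + 1"
              using uu by (simp add: B_def R_def power2_norm_eq_inner[symmetric] power2_eq_square)
            also have "\<dots> = 2 * (R + B) / R" using Rp by (simp add: field_simps)
            also have "\<dots> \<le> 2 * (A^2 / R) / R" using key Rp by (intro divide_right_mono) auto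
            also have "\<dots> \<le> 2 * ((\<kappa> * (3/2 * R))^2 / R) / R"
              using A2 Rp by (intro divide_right_mono mult_left_mono) auto
            also have "\<dots> = (9/2) * \<kappa>^2" using Rp by (simp add: field_simps power2_eq_square)
            also have "\<dots> < (3 * \<kappa>)^2" using kp by (simp add: power2_eq_square)
            finally have sq: "(norm ((1/R) *\<^sub>R (z - p) + u))^2 < (3 * \<kappa>)^2" .
            have "norm ((1/R) *\<^sub>R (z - p) + u) < 3 * \<kappa>"
              using power2_less_imp_less[OF sq] kp by simp
            then have "dist y x < t * (3 * \<kappa>)" using dyx tp by simp
            also have "\<dots> \<le> e" using k1(2) tp by (simp add: field_simps)
            finally show "\<exists>y\<in>K. dist y x < e" using yK by blast
          qed
          then show ?thesis using closed_approachable[OF cK(2)] by blast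
        qed
        then show "x \<in> K \<inter> {x. a \<bullet> x = a \<bullet> p}" using ax by simp
      qed
      then show False using noray by blast
    qed
  qed
  then obtain \<kappa> where k: "\<kappa> > 0" "\<forall>z\<in>OmI. \<not> viol \<kappa> z" by blast
  define Hs where "Hs = {z. (a - \<kappa> *\<^sub>R u) \<bullet> z \<le> (a - \<kappa> *\<^sub>R u) \<bullet> p - \<kappa> * r/2}"
  have "OmI \<subseteq> Hs" using k(2) unfolding viol_def Hs_def
    by (auto simp: inner_diff_left inner_diff_right algebra_simps not_less)
  moreover have "convex Hs" "closed Hs" unfolding Hs_def
    by (simp_all add: convex_halfspace_le closed_halfspace_le)
  ultimately have "K \<subseteq> Hs" unfolding K_def
    by (meson closure_minimal hull_minimal)
  then have "p \<in> Hs" using pK by blast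
  then show False using k(1) r(1) by (simp add: Hs_def) (meson mult_pos_pos not_le)
qed



lemma orth2:
  fixes a :: "real^2"
  assumes "norm a = 1"
  shows "\<exists>u. a \<bullet> u = 0 \<and> norm u = 1 \<and> (\<forall>x. x = (a \<bullet> x) *\<^sub>R a + (u \<bullet> x) *\<^sub>R u)"
proof -
  define u where "u \<equiv> (\<chi> i. if i = 1 then - (a$2) else a$1) :: real^2"
  have n: "a$1 * a$1 + a$2 * a$2 = 1"
    using assms(1) unfolding norm_eq_sqrt_inner inner_vec_def
    by (simp add: sum_2)
  have 1: "a \<bullet> u = 0" by (simp add: u_def inner_vec_def sum_2 algebra_simps)
  have "u \<bullet> u = 1" using n by (simp add: u_def inner_vec_def sum_2 algebra_simps)
  then have 2: "norm u = 1" by (simp add: norm_eq_sqrt_inner)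
  have 3: "x = (a \<bullet> x) *\<^sub>R a + (u \<bullet> x) *\<^sub>R u" for x
    unfolding vec_eq_iff forall_2
    using n apply (simp add: u_def inner_vec_def sum_2 algebra_simps)
    apply (intro conjI; algebra)
    done
  show ?thesis using 1 2 3 by blast
qed

lemma comp_closure:
  fixes U :: "'a::real_normed_vector set"
  assumes "open U" "w \<in> components U" "q \<in> U" "q \<in> closure w"
  shows "q \<in> w"
proof -
  let ?V = "connected_component_set U q"
  have oV: "open ?V" using open_connected_component assms(1) by blast
  have qV: "q \<in> ?V" using assms(3) by simp
  have "?V \<inter> closure w \<noteq> {}" using qV assms(4) by blast
  then have "?V \<inter> w \<noteq> {}" using open_Int_closure_eq_empty[OF oV] by blast
  then obtain z where z: "z \<in> ?V" "z \<in> w" by blast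
  obtain x where x: "x \<in> U" "w = connected_component_set U x" using assms(2) components_iff by blast
  then have "w = connected_component_set U z" using z(2) connected_component_eq by metis
  also have "\<dots> = ?V" using z(1) connected_component_eq by metis
  finally show ?thesis using qV by simp
qed

lemma int_lt:
  fixes K :: "'a::euclidean_space set"
  assumes "x \<in> interior K" "\<forall>y\<in>K. a \<bullet> y \<le> \<beta>" "a \<noteq> 0"
  shows "a \<bullet> x < \<beta>"
proof -
  obtain e where e: "e > 0" "ball x e \<subseteq> K" using assms(1) mem_interior by blast
  define y where "y = x + (e / 2 / norm a) *\<^sub>R a"
  have "dist x y = e / 2" using assms(3) e by (simp add: y_def dist_norm)
  then have "y \<in> K" using e by auto
  then have "a \<bullet> y \<le> \<beta>" using assms(2) by blast
  moreover have "a \<bullet> y = a \<bullet> x + e / 2 * norm a"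
    using assms(3) by (simp add: y_def inner_add_right power2_norm_eq_inner[symmetric] power2_eq_square)
  moreover have "e / 2 * norm a > 0" using e assms(3) by simp
  ultimately show ?thesis by linarith
qed

lemma supp:
  fixes C :: "(real^2) set"
  assumes "convex C" "interior C \<noteq> {}" "p \<in> frontier C"
  shows "\<exists>a. norm a = 1 \<and> (\<forall>x\<in>closure C. a \<bullet> x \<le> a \<bullet> p)"
proof -
  have ri: "rel_interior C = interior C" using rel_interior_nonempty_interior assms(2) by blast
  have "p \<in> closure C" "p \<notin> rel_interior C" using assms(3) ri by (auto simp: frontier_def)
  then obtain a where a: "a \<noteq> 0" "\<And>y. y \<in> closure C \<Longrightarrow> a \<bullet> p \<le> a \<bullet> y"
    using supporting_hyperplane_relative_frontier[OF assms(1)] by metis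
  define b where "b = - (1 / norm a) *\<^sub>R a"
  have "norm b = 1" using a(1) by (simp add: b_def)
  moreover have "b \<bullet> x \<le> b \<bullet> p" if "x \<in> closure C" for x
  proof -
    have "a \<bullet> p \<le> a \<bullet> x" using a(2) that by blast
    then have "(a \<bullet> p) / norm a \<le> (a \<bullet> x) / norm a" using a(1) by (intro divide_right_mono) auto
    then show ?thesis by (simp add: b_def)
  qed
  ultimately show ?thesis by blast
qed

lemma seg_param:
  fixes p u :: "'a::real_vector"
  assumes "s1 \<le> s" "s \<le> s2" "s1 < s2"
  shows "p + s *\<^sub>R u \<in> closed_segment (p + s1 *\<^sub>R u) (p + s2 *\<^sub>R u)"
proof -
  define \<theta> where "\<theta> = (s - s1) / (s2 - s1)"
  have th: "0 \<le> \<theta>" "\<theta> \<le> 1" using assms by (auto simp: \<theta>_def field_simps)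
  have e0: "\<theta> * (s2 - s1) = s - s1" using assms by (simp add: \<theta>_def)
  have "(1 - \<theta>) * s1 + \<theta> * s2 = s1 + \<theta> * (s2 - s1)" by (simp add: algebra_simps)
  then have e: "(1 - \<theta>) * s1 + \<theta> * s2 = s" using e0 by linarith
  have "(1 - \<theta>) *\<^sub>R (p + s1 *\<^sub>R u) + \<theta> *\<^sub>R (p + s2 *\<^sub>R u) = p + ((1 - \<theta>) * s1 + \<theta> * s2) *\<^sub>R u"
    by (simp add: algebra_simps)
  then show ?thesis unfolding in_segment using th e by metis
qed



lemma main_comp:
  fixes OmI :: "(real^2) set" and w :: "(real^2) set"
  defines "C \<equiv> convex hull OmI"
  assumes clo: "closed OmI" and pc: "path_connected OmI"
    and A1: "\<forall>x e. e \<noteq> 0 \<longrightarrow> \<not> ray x e \<subseteq> frontier C"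
    and A3a: "interior C \<noteq> {}"
    and w: "w \<in> components (interior C - OmI)"
    and pw: "p \<in> frontier w" and pn: "p \<notin> OmI"
  shows "\<exists>L. supporting_line L C \<and> frontier w - OmI \<subseteq> L"
proof -
  define U where "U = interior C - OmI"
  define K where "K = closure C"
  have oU: "open U" unfolding U_def using clo by (simp add: open_Diff)
  have ow: "open w" using open_components[OF oU] w by (simp add: U_def)
  have wU: "w \<subseteq> U" using in_components_subset w by (simp add: U_def)
  have frw: "frontier w = closure w - w" using ow by (simp add: frontier_def interior_open)
  have cC: "convex C" by (simp add: C_def convex_convex_hull)
  have cK: "convex K" "closed K" by (simp_all add: K_def convex_closure cC)
  have OK: "OmI \<subseteq> K" unfolding K_def C_def by (meson closure_subset hull_subset subset_trans)
  have iK: "interior K = interior C" unfolding K_def using convex_interior_closure[OF cC] .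
  have frC: "frontier C = K - interior C" by (simp add: K_def frontier_def)
  have wC: "w \<subseteq> interior C" using wU by (auto simp: U_def)
  have pcw: "p \<in> closure w" using pw frw by blast
  have pK: "p \<in> K" using pcw wC interior_subset closure_mono unfolding K_def by blast
  have pnI: "p \<notin> interior C"
  proof
    assume "p \<in> interior C"
    then have "p \<in> U" using pn by (simp add: U_def)
    then have "p \<in> w" using comp_closure[OF oU _ _ pcw] w by (simp add: U_def)
    then show False using pw frw by blast
  qed
  have pfC: "p \<in> frontier C" using pK pnI frC by blast
  obtain a where na: "norm a = 1" and sup: "\<forall>x\<in>K. a \<bullet> x \<le> a \<bullet> p"
    using supp[OF cC A3a pfC] unfolding K_def by blast
  have a0: "a \<noteq> 0" using na by auto
  obtain u where au: "a \<bullet> u = 0" and nu: "norm u = 1" and dec: "\<forall>x. x = (a \<bullet> x) *\<^sub>R a + (u \<bullet> x) *\<^sub>R u"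
    using orth2[OF na] by blast
  have intlt: "\<And>x. x \<in> interior C \<Longrightarrow> a \<bullet> x < a \<bullet> p"
    using int_lt[OF _ sup a0] iK by blast
  have LK: "K \<inter> {x. a \<bullet> x = a \<bullet> p} \<subseteq> frontier C"
    using intlt frC by fastforce
  have onL: "\<And>x. a \<bullet> x = a \<bullet> p \<Longrightarrow> x = p + (u \<bullet> (x - p)) *\<^sub>R u"
  proof -
    fix x assume "a \<bullet> x = a \<bullet> p"
    then have "a \<bullet> (x - p) = 0" by (simp add: inner_diff_right)
    moreover have "x - p = (a \<bullet> (x - p)) *\<^sub>R a + (u \<bullet> (x - p)) *\<^sub>R u" by (rule dec[rule_format])
    ultimately have "x - p = (u \<bullet> (x - p)) *\<^sub>R u" by (metis add_0 scaleR_zero_left)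
    then show "x = p + (u \<bullet> (x - p)) *\<^sub>R u" by (simp add: algebra_simps)
  qed
  have normL: "\<And>x. a \<bullet> x = a \<bullet> p \<Longrightarrow> norm (x - p) = \<bar>u \<bullet> (x - p)\<bar>"
  proof -
    fix x assume "a \<bullet> x = a \<bullet> p"
    then have "x = p + (u \<bullet> (x - p)) *\<^sub>R u" by (rule onL)
    then have "x - p = (u \<bullet> (x - p)) *\<^sub>R u" by (metis add_diff_cancel_left')
    then have "norm (x - p) = norm ((u \<bullet> (x - p)) *\<^sub>R u)" by simp
    then show "norm (x - p) = \<bar>u \<bullet> (x - p)\<bar>" using nu by simp
  qed
  have nr1: "\<not> ray p (-u) \<subseteq> K \<inter> {x. a \<bullet> x = a \<bullet> p}"
  proof
    assume "ray p (-u) \<subseteq> K \<inter> {x. a \<bullet> x = a \<bullet> p}"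
    then have "ray p (-u) \<subseteq> frontier C" using LK by blast
    moreover have "-u \<noteq> 0" using nu by auto
    ultimately show False using A1 by blast
  qed
  have nr2: "\<not> ray p (-(-u)) \<subseteq> K \<inter> {x. a \<bullet> x = a \<bullet> p}"
  proof
    assume "ray p (-(-u)) \<subseteq> K \<inter> {x. a \<bullet> x = a \<bullet> p}"
    then have "ray p u \<subseteq> frontier C" using LK by auto
    moreover have "u \<noteq> 0" using nu by auto
    ultimately show False using A1 by blast
  qed
  have KK: "closure (convex hull OmI) = K" by (simp add: K_def C_def)
  obtain t1' where t1': "t1' \<in> OmI" "a \<bullet> t1' = a \<bullet> p" "u \<bullet> (t1' - p) < 0"
    using side[OF clo _ pn _ na au nu dec, unfolded KK, OF pK sup nr1] by blast
  have dec2: "\<forall>x. x = (a \<bullet> x) *\<^sub>R a + ((-u) \<bullet> x) *\<^sub>R (-u)"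
  proof
    fix x
    have F: "((-u) \<bullet> x) *\<^sub>R (-u) = (u \<bullet> x) *\<^sub>R u" by simp
    show "x = (a \<bullet> x) *\<^sub>R a + ((-u) \<bullet> x) *\<^sub>R (-u)" unfolding F by (rule dec[rule_format])
  qed
  obtain t2' where t2': "t2' \<in> OmI" "a \<bullet> t2' = a \<bullet> p" "(-u) \<bullet> (t2' - p) < 0"
    using side[OF clo _ pn _ na _ _ dec2, unfolded KK, OF pK sup] au nu nr2 by auto
  define S1 where "S1 = OmI \<inter> {x. a \<bullet> x = a \<bullet> p} \<inter> {x. u \<bullet> x \<le> u \<bullet> p} \<inter> cball p (norm (t1' - p))"
  have cS1: "compact S1" unfolding S1_def
    by (intro closed_Int_compact closed_Int clo closed_hyperplane closed_halfspace_le compact_cball)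
  have t1'S: "t1' \<in> S1" using t1' by (simp add: S1_def dist_norm norm_minus_commute inner_diff_right)
  obtain t1 where t1S: "t1 \<in> S1" and t1max: "\<And>x. x \<in> S1 \<Longrightarrow> u \<bullet> x \<le> u \<bullet> t1"
  proof -
    have ne: "S1 \<noteq> {}" using t1'S by blast
    have co: "continuous_on S1 (\<lambda>x. u \<bullet> x)" by (intro continuous_intros)
    have "\<exists>x\<in>S1. \<forall>y\<in>S1. u \<bullet> y \<le> u \<bullet> x" using continuous_attains_sup[OF cS1 ne co] .
    then show ?thesis using that by blast
  qed
  define S2 where "S2 = OmI \<inter> {x. a \<bullet> x = a \<bullet> p} \<inter> {x. u \<bullet> x \<ge> u \<bullet> p} \<inter> cball p (norm (t2' - p))"
  have cS2: "compact S2" unfolding S2_def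
    by (intro closed_Int_compact closed_Int clo closed_hyperplane closed_halfspace_ge compact_cball)
  have t2'S: "t2' \<in> S2" using t2' by (simp add: S2_def dist_norm norm_minus_commute inner_diff_right)
  obtain t2 where t2S: "t2 \<in> S2" and t2min: "\<And>x. x \<in> S2 \<Longrightarrow> u \<bullet> t2 \<le> u \<bullet> x"
  proof -
    have ne: "S2 \<noteq> {}" using t2'S by blast
    have co: "continuous_on S2 (\<lambda>x. u \<bullet> x)" by (intro continuous_intros)
    have "\<exists>x\<in>S2. \<forall>y\<in>S2. u \<bullet> x \<le> u \<bullet> y" using continuous_attains_inf[OF cS2 ne co] .
    then show ?thesis using that by blast
  qed
  have t1: "t1 \<in> OmI" "a \<bullet> t1 = a \<bullet> p" "u \<bullet> t1 \<le> u \<bullet> p" using t1S by (auto simp: S1_def)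
  have t2: "t2 \<in> OmI" "a \<bullet> t2 = a \<bullet> p" "u \<bullet> t2 \<ge> u \<bullet> p" using t2S by (auto simp: S2_def)
  define s1 where "s1 = u \<bullet> (t1 - p)"
  define s2 where "s2 = u \<bullet> (t2 - p)"
  have t1e: "t1 = p + s1 *\<^sub>R u" using onL[OF t1(2), folded s1_def] .
  have t2e: "t2 = p + s2 *\<^sub>R u" using onL[OF t2(2), folded s2_def] .
  have s1n: "s1 < 0"
  proof -
    have "s1 \<le> 0" using t1(3) by (simp add: s1_def inner_diff_right)
    moreover have "s1 \<noteq> 0" using t1e t1(1) pn by auto
    ultimately show ?thesis by simp
  qed
  have s2p: "s2 > 0"
  proof -
    have "s2 \<ge> 0" using t2(3) by (simp add: s2_def inner_diff_right)
    moreover have "s2 \<noteq> 0" using t2e t2(1) pn by auto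
    ultimately show ?thesis by simp
  qed
  have gap: "u \<bullet> (x - p) \<le> s1 \<or> u \<bullet> (x - p) \<ge> s2" if "x \<in> OmI" "a \<bullet> x = a \<bullet> p" for x
  proof (cases "u \<bullet> x \<le> u \<bullet> p")
    case True
    have "u \<bullet> x \<le> u \<bullet> t1"
    proof (cases "norm (x - p) \<le> norm (t1' - p)")
      case True
      then have "x \<in> S1" using that \<open>u \<bullet> x \<le> u \<bullet> p\<close> by (simp add: S1_def dist_norm norm_minus_commute)
      then show ?thesis using t1max by blast
    next
      case False
      have "norm (x - p) = - (u \<bullet> (x - p))" using normL[OF that(2)] \<open>u \<bullet> x \<le> u \<bullet> p\<close>
        by (simp add: inner_diff_right)
      moreover have "norm (t1' - p) = - (u \<bullet> (t1' - p))" using normL[OF t1'(2)] t1'(3) by simp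
      ultimately have "u \<bullet> x < u \<bullet> t1'" using False by (simp add: inner_diff_right)
      moreover have "u \<bullet> t1' \<le> u \<bullet> t1" using t1max t1'S by blast
      ultimately show ?thesis by simp
    qed
    then show ?thesis by (simp add: s1_def inner_diff_right)
  next
    case False
    have "u \<bullet> t2 \<le> u \<bullet> x"
    proof (cases "norm (x - p) \<le> norm (t2' - p)")
      case True
      then have "x \<in> S2" using that False by (simp add: S2_def dist_norm norm_minus_commute)
      then show ?thesis using t2min by blast
    next
      case False2: False
      have "norm (x - p) = u \<bullet> (x - p)" using normL[OF that(2)] False
        by (simp add: inner_diff_right)
      moreover have "norm (t2' - p) = u \<bullet> (t2' - p)" using normL[OF t2'(2)] t2'(3) by simp
      ultimately have "u \<bullet> x > u \<bullet> t2'" using False2 by (simp add: inner_diff_right)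
      moreover have "u \<bullet> t2 \<le> u \<bullet> t2'" using t2min t2'S by blast
      ultimately show ?thesis by simp
    qed
    then show ?thesis by (simp add: s2_def inner_diff_right)
  qed
  have t12: "t1 \<noteq> t2"
  proof
    assume "t1 = t2"
    then have "s1 *\<^sub>R u = s2 *\<^sub>R u" using t1e t2e by simp
    then have "(s1 - s2) *\<^sub>R u = 0" by (simp add: scaleR_diff_left)
    moreover have "u \<noteq> 0" using nu by auto
    ultimately have "s1 = s2" by simp
    then show False using s1n s2p by simp
  qed
  have segL: "a \<bullet> x = a \<bullet> p \<and> s1 \<le> u \<bullet> (x - p) \<and> u \<bullet> (x - p) \<le> s2" if xs: "x \<in> closed_segment t1 t2" for x
  proof -
    obtain \<theta> where th: "0 \<le> \<theta>" "\<theta> \<le> 1" "x = (1 - \<theta>) *\<^sub>R t1 + \<theta> *\<^sub>R t2"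
      using in_segment(1)[THEN iffD1, OF xs] by blast
    have "x = p + ((1 - \<theta>) * s1 + \<theta> * s2) *\<^sub>R u" using th(3) t1e t2e by (simp add: algebra_simps)
    then have xe: "x - p = ((1 - \<theta>) * s1 + \<theta> * s2) *\<^sub>R u" by (simp add: algebra_simps)
    have ux: "u \<bullet> (x - p) = (1 - \<theta>) * s1 + \<theta> * s2" using xe nu by (simp add: norm_eq_1)
    have ax: "a \<bullet> (x - p) = 0" using xe au by simp
    have "(1 - \<theta>) * s1 + \<theta> * s2 \<ge> s1"
    proof -
      have "(1 - \<theta>) * s1 + \<theta> * s2 = s1 + \<theta> * (s2 - s1)" by (simp add: algebra_simps)
      moreover have "\<theta> * (s2 - s1) \<ge> 0" using th s1n s2p by simp
      ultimately show ?thesis by linarith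
    qed
    moreover have "(1 - \<theta>) * s1 + \<theta> * s2 \<le> s2"
    proof -
      have "(1 - \<theta>) * s1 + \<theta> * s2 = s2 - (1 - \<theta>) * (s2 - s1)" by (simp add: algebra_simps)
      moreover have "(1 - \<theta>) * (s2 - s1) \<ge> 0" using th s1n s2p by simp
      ultimately show ?thesis by linarith
    qed
    ultimately show ?thesis using ux ax by (simp add: inner_diff_right)
  qed
  have segO: "x = t1 \<or> x = t2" if "x \<in> closed_segment t1 t2" "x \<in> OmI" for x
  proof -
    have h: "a \<bullet> x = a \<bullet> p" "s1 \<le> u \<bullet> (x - p)" "u \<bullet> (x - p) \<le> s2" using segL[OF that(1)] by auto
    then have "u \<bullet> (x - p) = s1 \<or> u \<bullet> (x - p) = s2" using gap[OF that(2) h(1)] by linarith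
    moreover have xe: "x = p + (u \<bullet> (x - p)) *\<^sub>R u" by (rule onL[OF h(1)])
    ultimately show ?thesis using t1e t2e by metis
  qed
  have segK: "closed_segment t1 t2 \<subseteq> K" using closed_segment_subset[OF _ _ cK(1)] t1(1) t2(1) OK by blast
  have pseg: "p \<in> closed_segment t1 t2" using seg_param[of s1 0 s2 p u] s1n s2p t1e t2e by simp
  have ballL: "x \<in> closed_segment t1 t2" if "a \<bullet> x = a \<bullet> p" "norm (x - p) < min (-s1) s2" for x
  proof -
    have "\<bar>u \<bullet> (x - p)\<bar> < min (-s1) s2" using that normL by simp
    then have "s1 \<le> u \<bullet> (x - p)" "u \<bullet> (x - p) \<le> s2" by auto
    then have "p + (u \<bullet> (x - p)) *\<^sub>R u \<in> closed_segment t1 t2"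
      using seg_param[of s1 "u \<bullet> (x - p)" s2 p u] s1n s2p t1e t2e by simp
    moreover have "x = p + (u \<bullet> (x - p)) *\<^sub>R u" by (rule onL[OF that(1)])
    ultimately show ?thesis by metis
  qed
  obtain g0 where g0: "path g0" "path_image g0 \<subseteq> OmI" "pathstart g0 = t1" "pathfinish g0 = t2"
    using pc t1(1) t2(1) unfolding path_connected_def by blast
  obtain g where g: "arc g" "path_image g \<subseteq> OmI" "pathstart g = t1" "pathfinish g = t2"
    using path_contains_arc[OF g0(1) g0(3) g0(4) t12] g0(2) by (metis order_trans)
  define c where "c = g +++ linepath t2 t1"
  define S where "S = path_image c"
  have SU: "S = path_image g \<union> closed_segment t1 t2"
    unfolding S_def c_def using g(4) by (simp add: path_image_join closed_segment_commute)
  have sp: "simple_path c" unfolding c_def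
  proof (rule simple_path_join_loop)
    show "arc g" by (rule g(1))
    show "arc (linepath t2 t1)" using t12 by simp
    show "pathfinish g = pathstart (linepath t2 t1)" using g(4) by simp
    show "pathfinish (linepath t2 t1) = pathstart g" using g(3) by simp
    show "path_image g \<inter> path_image (linepath t2 t1) \<subseteq> {pathstart g, pathstart (linepath t2 t1)}"
      using segO g(2,3) by (auto simp: closed_segment_commute)
  qed
  have loop: "pathfinish c = pathstart c" using g(3) by (simp add: c_def)
  have cS: "compact S" unfolding S_def using sp by (simp add: compact_simple_path_image)
  have clS: "closed S" using cS by (simp add: compact_imp_closed)
  have bS: "bounded S" using cS by (simp add: compact_imp_bounded)
  have SK: "S \<subseteq> K" using SU g(2) OK segK by blast
  have pS: "p \<in> S" using SU pseg by blast
  have hom: "S homeomorphic sphere (0::real^2) 1"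
  proof -
    have "S homeomorphic sphere (0::complex) 1"
      unfolding S_def by (rule homeomorphic_simple_path_image_circle[OF sp loop]) simp
    moreover have "sphere (0::complex) 1 homeomorphic sphere (0::real^2) 1"
      by (rule homeomorphic_spheres_gen) auto
    ultimately show ?thesis by (rule homeomorphic_trans)
  qed
  have JBF: "\<And>T. T \<in> components (- S) \<Longrightarrow> frontier T = S"
    using Jordan_Brouwer_frontier[OF hom] by simp
  have JBS: "\<not> connected (- S)"
    using Jordan_Brouwer_separation[OF hom] by simp
  have pg: "p \<notin> path_image g" using g(2) pn by blast
  have "open (- path_image g)" using g(1) by (simp add: arc_imp_path compact_imp_closed compact_path_image open_Compl)
  then obtain \<epsilon>0 where e0: "\<epsilon>0 > 0" "ball p \<epsilon>0 \<subseteq> - path_image g"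
    using pg open_contains_ball by blast
  define \<epsilon> where "\<epsilon> = min \<epsilon>0 (min (-s1) s2)"
  have ep: "\<epsilon> > 0" using e0 s1n s2p by (simp add: \<epsilon>_def)
  define Dp where "Dp = ball p \<epsilon> \<inter> {x. a \<bullet> x > a \<bullet> p}"
  define Dm where "Dm = ball p \<epsilon> \<inter> {x. a \<bullet> x < a \<bullet> p}"
  have cDp: "connected Dp" unfolding Dp_def by (intro convex_connected convex_Int convex_ball convex_halfspace_gt)
  have cDm: "connected Dm" unfolding Dm_def by (intro convex_connected convex_Int convex_ball convex_halfspace_lt)
  define dp where "dp = p + (\<epsilon>/2) *\<^sub>R a"
  have aa: "a \<bullet> a = 1" using na by (simp add: norm_eq_1)
  have dpD: "dp \<in> Dp" using ep na aa by (simp add: Dp_def dp_def dist_norm inner_add_right)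
  have DpS: "Dp \<inter> S = {}"
  proof -
    have "Dp \<inter> K = {}" using sup by (force simp: Dp_def)
    then show ?thesis using SK by blast
  qed
  have DmS: "Dm \<inter> S = {}"
  proof -
    have "Dm \<inter> path_image g = {}" using e0 by (force simp: Dm_def \<epsilon>_def)
    moreover have "Dm \<inter> closed_segment t1 t2 = {}" using segL by (force simp: Dm_def)
    ultimately show ?thesis using SU by blast
  qed
  have ballS: "x \<in> Dp \<union> Dm" if "x \<in> ball p \<epsilon>" "x \<notin> S" for x
  proof (rule ccontr)
    assume "x \<notin> Dp \<union> Dm"
    then have ax: "a \<bullet> x = a \<bullet> p" using that(1) by (auto simp: Dp_def Dm_def)
    have "norm (x - p) < min (-s1) s2" using that(1) by (simp add: \<epsilon>_def dist_norm norm_minus_commute)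
    then have "x \<in> closed_segment t1 t2" using ballL ax by blast
    then show False using that(2) SU by blast
  qed
  define Tp where "Tp = connected_component_set (- S) dp"
  have dpS: "dp \<in> - S" using dpD DpS by blast
  have Tpc: "Tp \<in> components (- S)" unfolding Tp_def using dpS by (rule componentsI)
  obtain T1 where T1: "T1 \<in> components (- S)" "T1 \<noteq> Tp"
  proof (rule ccontr)
    assume "\<not> thesis"
    then have all: "\<And>T. T \<in> components (- S) \<Longrightarrow> T = Tp" using that by blast
    have "- S = \<Union>(components (- S))" by simp
    also have "\<dots> \<subseteq> Tp" using all by blast
    finally have "- S \<subseteq> Tp" .
    moreover have "Tp \<subseteq> - S" unfolding Tp_def by (rule connected_component_subset)
    ultimately have "- S = Tp" by blast
    then show False using JBS connected_connected_component unfolding Tp_def by metis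
  qed
  have T1S: "T1 \<subseteq> - S" using T1(1) in_components_subset by blast
  have T1cc: "\<And>y. y \<in> T1 \<Longrightarrow> T1 = connected_component_set (- S) y"
    using T1(1) components_iff connected_component_eq by metis
  have "frontier T1 = S" using JBF T1(1) by blast
  then have "p \<in> closure T1" using pS by (auto simp: frontier_def)
  then obtain y where y: "y \<in> T1" "dist y p < \<epsilon>" using ep closure_approachable by blast
  have yb: "y \<in> ball p \<epsilon>" using y(2) by (simp add: dist_commute)
  have yS: "y \<notin> S" using y(1) T1S by blast
  have yDm: "y \<in> Dm"
  proof (rule ccontr)
    assume "y \<notin> Dm"
    then have yDp: "y \<in> Dp" using ballS[OF yb yS] by blast
    have "Dp \<subseteq> Tp" unfolding Tp_def using dpD cDp DpS by (intro connected_component_maximal) auto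
    then have "y \<in> Tp" using yDp by blast
    then have "Tp = connected_component_set (- S) y" unfolding Tp_def using connected_component_eq by metis
    then show False using T1cc[OF y(1)] T1(2) by simp
  qed
  have DmT1: "Dm \<subseteq> T1"
    using T1cc[OF y(1)] yDm cDm DmS connected_component_maximal[of y Dm "- S"] by blast
  have outTp: "outside S \<subseteq> Tp"
  proof -
    have co: "connected (outside S)" using connected_outside[OF bS] by simp
    have mK: "- K \<subseteq> outside S" using outside_subset_convex[OF cK(1) SK] .
    have "dp \<notin> K" using dpD sup by (force simp: Dp_def)
    then have "dp \<in> outside S" using mK by blast
    moreover have "outside S \<subseteq> - S" using outside_no_overlap by blast
    ultimately show ?thesis unfolding Tp_def using co by (intro connected_component_maximal) auto
  qed
  have T1Tp: "T1 \<inter> Tp = {}" using components_nonoverlap[OF T1(1) Tpc] T1(2) by blast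
  have T1K: "T1 \<subseteq> K"
  proof
    fix x assume "x \<in> T1"
    then have "x \<notin> outside S" using T1Tp outTp by blast
    then show "x \<in> K" using outside_subset_convex[OF cK(1) SK] by blast
  qed
  have oT1: "open T1" using open_components[OF _ T1(1)] clS by (simp add: open_Compl)
  have T1i: "T1 \<subseteq> interior C" using interior_maximal[OF T1K oT1] iK by simp
  have wS: "w \<subseteq> - S"
  proof
    fix x assume xw: "x \<in> w"
    then have xi: "x \<in> interior C" "x \<notin> OmI" using wU by (auto simp: U_def)
    have "x \<notin> path_image g" using xi(2) g(2) by blast
    moreover have "x \<notin> closed_segment t1 t2" using segL intlt[OF xi(1)] by force
    ultimately show "x \<in> - S" using SU by blast
  qed
  obtain z where z: "z \<in> w" "dist z p < \<epsilon>" using pcw ep closure_approachable by blast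
  have zDm: "z \<in> Dm" using z wC intlt by (auto simp: Dm_def dist_commute)
  have zT1: "z \<in> T1" using zDm DmT1 by blast
  have wT1: "w \<subseteq> T1"
    using T1cc[OF zT1] in_components_connected[OF w] wS z(1) connected_component_maximal[of z w "- S"] by blast
  define L where "L = {x. a \<bullet> x = a \<bullet> p}"
  have "supporting_line L C"
    unfolding supporting_line_def
  proof (intro exI conjI)
    show "a \<noteq> 0" by (rule a0)
    show "L = {x. a \<bullet> x = a \<bullet> p}" by (simp add: L_def)
    show "\<forall>x\<in>C. a \<bullet> x \<le> a \<bullet> p" using sup closure_subset unfolding K_def by blast
    show "L \<inter> closure C \<noteq> {}" using pK unfolding L_def K_def by blast
  qed
  moreover have "frontier w - OmI \<subseteq> L"
  proof
    fix q assume q: "q \<in> frontier w - OmI"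
    have "q \<in> closure T1" using q frw closure_mono[OF wT1] by blast
    then have "q \<in> T1 \<union> S" using closure_Un_frontier[of T1] \<open>frontier T1 = S\<close> by simp
    moreover have "q \<notin> T1"
    proof
      assume "q \<in> T1"
      then have "q \<in> U" using T1i q by (auto simp: U_def)
      then have "q \<in> w" using comp_closure[OF oU _ _] w q frw by (auto simp: U_def)
      then show False using q frw by blast
    qed
    ultimately have "q \<in> S" by blast
    then have "q \<in> closed_segment t1 t2" using SU q g(2) by blast
    then show "q \<in> L" using segL by (simp add: L_def)
  qed
  ultimately show ?thesis by blast
qed

theorem mainTheorem6:
  fixes OmO OmI :: "(real^2) set"
  assumes OmO_open: "open OmO" and OmO_ne: "OmO \<noteq> {}" and OmO_sc: "strictly_convex OmO"
    and OmI_closed: "closed OmI" and OmI_sub: "OmI \<subseteq> OmO"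
    and A1: "\<forall>x e. e \<noteq> 0 \<longrightarrow> \<not> ray x e \<subseteq> frontier (convex hull OmI)"
    and A2: "closure (convex hull OmI) \<subseteq> OmO"
    and A3a: "interior (convex hull OmI) \<noteq> {}"
    and A3b: "ray_directions OmO = ray_directions (convex hull OmI)"
    and A4: "\<forall>B. bounded B \<longrightarrow>
               finite {w \<in> components (interior (convex hull OmI) - OmI). w \<inter> B \<noteq> {}}"
    and pc: "path_connected OmI"
  shows "\<forall>w \<in> components (interior (convex hull OmI) - OmI).
           \<exists>L. supporting_line L (convex hull OmI) \<and> frontier w - OmI \<subseteq> L"
  proof (intro ballI)
  fix w assume w: "w \<in> components (interior (convex hull OmI) - OmI)"
  show "\<exists>L. supporting_line L (convex hull OmI) \<and> frontier w - OmI \<subseteq> L"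
  proof (cases "frontier w - OmI = {}")
    case False
    then obtain p where p: "p \<in> frontier w" "p \<notin> OmI" by blast
    show ?thesis using main_comp[OF OmI_closed pc A1 A3a w p] .
  next
    case True
    have cl: "convex hull OmI \<subseteq> closure (convex hull OmI)" by (rule closure_subset)
    have nU: "OmO \<noteq> UNIV" using OmO_sc by (simp add: strictly_convex_def)
    have "convex hull OmI \<noteq> UNIV" using cl A2 nU by blast
    moreover have "convex hull OmI \<noteq> {}" using A3a interior_subset by blast
    ultimately have "frontier (convex hull OmI) \<noteq> {}" by (simp add: frontier_eq_empty)
    then obtain p0 where p0: "p0 \<in> frontier (convex hull OmI)" by blast
    obtain a where na: "norm a = 1" and sup: "\<forall>x\<in>closure (convex hull OmI). a \<bullet> x \<le> a \<bullet> p0"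
      using supp[OF convex_convex_hull A3a p0] by blast
    have "supporting_line {x. a \<bullet> x = a \<bullet> p0} (convex hull OmI)"
      unfolding supporting_line_def
    proof (intro exI conjI)
      show "a \<noteq> 0" using na by auto
      show "{x. a \<bullet> x = a \<bullet> p0} = {x. a \<bullet> x = a \<bullet> p0}" by simp
      show "\<forall>x\<in>convex hull OmI. a \<bullet> x \<le> a \<bullet> p0" using sup cl by blast
      show "{x. a \<bullet> x = a \<bullet> p0} \<inter> closure (convex hull OmI) \<noteq> {}"
        using p0 by (auto simp: frontier_def)
    qed
    then show ?thesis using True by blast
  qed
qed

end
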